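(* Fix integers $k \ge 3$ and $i \in \{2,\dots,k-1\}$, and let $T = \{1,\dots,k\}\setminus\{i\}$. Let $d \ge 1$ and suppose that $S \subset C_d$ satisfies $|S| \equiv 1 \pmod{k-1}$ and $|S| \le d - \log_k d$. Then $T$ tiles $\mathbb{Z}_k^d \setminus S$, i.e. $\mathbb{Z}_k^d \setminus S$ is a disjoint union of copies of $T$ in $\mathbb{Z}_k^d$.
   Context: $\mathbb{Z}_k$ denotes the integers modulo $k$, with elements written $0,1,\dots,k-1$. A copy of $T$ in $\mathbb{Z}_k^d$ is a set of the form $\{x + j e_s : j \in \mathbb{Z}_k,\ j \ne j_0\}$ for some $x \in \mathbb{Z}_k^d$, some coordinate direction $s \in \{1,\dots,d\}$ (with $e_s$ the $s$-th unit vector) and some $j_0 \in \mathbb{Z}_k$; that is, a line in one coordinate direction with one point removed (equivalently, a translate of the image of $T$ under $\mathbb{Z}\to\mathbb{Z}_k$ placed along one coordinate axis). For $1 \le j \le d$, the $j$-th corner $c_{j,d} \in \mathbb{Z}_k^d$ is the point whose $j$-th coordinate is $k-1$ and whose other coordinates are $0$, and $C_d = \{c_{j,d} : 1 \le j \le d\}$. *)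

theory Defs
  imports Complex_Main
begin

text \<open>Points of Z_k^d are functions nat => nat with coordinates 0..d-1 in {0..k-1}
  and all further coordinates equal to 0.\<close>
definition grid :: "nat \<Rightarrow> nat \<Rightarrow> (nat \<Rightarrow> nat) set" where
  "grid k d = {x. (\<forall>j<d. x j < k) \<and> (\<forall>j\<ge>d. x j = 0)}"

definition copy_of :: "nat \<Rightarrow> nat \<Rightarrow> nat set \<Rightarrow> (nat \<Rightarrow> nat) set \<Rightarrow> bool" where
  "copy_of k d T A \<longleftrightarrow> (\<exists>x\<in>grid k d. \<exists>s<d.
      A = (\<lambda>t. x(s := (x s + t) mod k)) ` T)"

definition tiles :: "nat \<Rightarrow> nat \<Rightarrow> nat set \<Rightarrow> (nat \<Rightarrow> nat) set \<Rightarrow> bool" where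
  "tiles k d T X \<longleftrightarrow> (\<exists>P. (\<forall>A\<in>P. copy_of k d T A) \<and> pairwise disjnt P \<and> \<Union>P = X)"

text \<open>The corner c_{j,d} (0-indexed: j < d): j-th coordinate k-1, others 0.\<close>
definition corner :: "nat \<Rightarrow> nat \<Rightarrow> (nat \<Rightarrow> nat)" where
  "corner k j = (\<lambda>m. if m = j then k - 1 else 0)"

definition corners :: "nat \<Rightarrow> nat \<Rightarrow> (nat \<Rightarrow> nat) set" where
  "corners k d = corner k ` {..<d}"

end

theory Submission
  imports Defs "HOL-Library.FuncSet"
begin


definition cube :: "nat \<Rightarrow> nat set \<Rightarrow> (nat \<Rightarrow> nat) \<Rightarrow> (nat \<Rightarrow> nat) set" where
  "cube k D b = {x. (\<forall>j\<in>D. x j < k) \<and> (\<forall>j. j \<notin> D \<longrightarrow> x j = b j)}"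

abbreviation zr :: "nat \<Rightarrow> nat" where "zr \<equiv> (\<lambda>_. 0)"

definition pline :: "nat \<Rightarrow> (nat \<Rightarrow> nat) \<Rightarrow> nat \<Rightarrow> nat \<Rightarrow> (nat \<Rightarrow> nat) set" where
  "pline k x s p = (\<lambda>u. x(s:=u)) ` ({..<k} - {p})"

definition good :: "nat \<Rightarrow> (nat \<Rightarrow> nat) set \<Rightarrow> bool" where
  "good k X \<longleftrightarrow> (\<exists>P. (\<forall>A\<in>P. \<exists>x s p. p < k \<and> A = pline k x s p) \<and> pairwise disjnt P \<and> \<Union>P = X)"

lemma good_empty: "good k {}"
  unfolding good_def by (rule exI[of _ "{}"]) auto

lemma good_pline: "p < k \<Longrightarrow> good k (pline k x s p)"
  unfolding good_def by (rule exI[of _ "{pline k x s p}"]) auto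

lemma good_UN:
  assumes "\<And>i. i \<in> I \<Longrightarrow> good k (A i)"
    and "\<And>i j. i \<in> I \<Longrightarrow> j \<in> I \<Longrightarrow> i \<noteq> j \<Longrightarrow> A i \<inter> A j = {}"
  shows "good k (\<Union>i\<in>I. A i)"
proof -
  from assms(1) have "\<forall>i\<in>I. \<exists>P. (\<forall>B\<in>P. \<exists>x s p. p < k \<and> B = pline k x s p) \<and> pairwise disjnt P \<and> \<Union>P = A i"
    unfolding good_def by blast
  then have "\<exists>Q. \<forall>i\<in>I. (\<forall>B\<in>Q i. \<exists>x s p. p < k \<and> B = pline k x s p) \<and> pairwise disjnt (Q i) \<and> \<Union>(Q i) = A i"
    by (rule bchoice)
  then obtain Q where Q0: "\<forall>i\<in>I. (\<forall>B\<in>Q i. \<exists>x s p. p < k \<and> B = pline k x s p) \<and> pairwise disjnt (Q i) \<and> \<Union>(Q i) = A i"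
    by blast
  have Q: "\<And>i. i \<in> I \<Longrightarrow> (\<forall>B\<in>Q i. \<exists>x s p. p < k \<and> B = pline k x s p) \<and> pairwise disjnt (Q i) \<and> \<Union>(Q i) = A i"
    using Q0 by blast
  show ?thesis unfolding good_def
  proof (intro exI[of _ "\<Union>i\<in>I. Q i"] conjI)
    show "\<forall>B\<in>\<Union>i\<in>I. Q i. \<exists>x s p. p < k \<and> B = pline k x s p"
    proof
      fix B assume "B \<in> (\<Union>i\<in>I. Q i)"
      then obtain i where "i \<in> I" "B \<in> Q i" by blast
      then show "\<exists>x s p. p < k \<and> B = pline k x s p" using Q by blast
    qed
    have "\<Union>(\<Union>i\<in>I. Q i) = (\<Union>i\<in>I. \<Union>(Q i))" by blast
    also have "\<dots> = (\<Union>i\<in>I. A i)" using Q by (intro SUP_cong) auto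
    finally show "\<Union>(\<Union>i\<in>I. Q i) = (\<Union>i\<in>I. A i)" .
    show "pairwise disjnt (\<Union>i\<in>I. Q i)"
    proof (rule pairwiseI)
      fix B C assume B: "B \<in> (\<Union>i\<in>I. Q i)" and C: "C \<in> (\<Union>i\<in>I. Q i)" and ne: "B \<noteq> C"
      from B obtain i where i: "i \<in> I" "B \<in> Q i" by blast
      from C obtain j where j: "j \<in> I" "C \<in> Q j" by blast
      show "disjnt B C"
      proof (cases "i = j")
        case True
        have "pairwise disjnt (Q i)" using Q[OF i(1)] by blast
        then show ?thesis using i j ne True unfolding pairwise_def by blast
      next
        case False
        have "\<Union>(Q i) = A i" "\<Union>(Q j) = A j" using Q i j by blast+
        then have "B \<subseteq> A i" "C \<subseteq> A j" using i j by blast+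
        then show ?thesis using assms(2)[OF i(1) j(1) False] unfolding disjnt_def by blast
      qed
    qed
  qed
qed

lemma good_Un:
  assumes "good k A" "good k B" "A \<inter> B = {}"
  shows "good k (A \<union> B)"
proof -
  have "good k (\<Union>i\<in>{True,False}. (if i then A else B))"
    by (rule good_UN) (use assms in auto)
  then show ?thesis by (simp add: Un_commute)
qed

lemma good_cong: "good k A \<Longrightarrow> A = B \<Longrightarrow> good k B" by simp



lemma cube_empty: "cube k {} b = {b}"
  unfolding cube_def by auto

lemma pline_in: "z \<in> pline k x s p \<longleftrightarrow> (\<exists>u<k. u \<noteq> p \<and> z = x(s:=u))"
  unfolding pline_def by auto

lemma cube_remove_point:
  assumes "finite D"
  shows "p \<in> cube k D b \<Longrightarrow> good k (cube k D b - {p})"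
  using assms
proof (induction D arbitrary: b p rule: finite_induct)
  case empty
  then show ?case by (simp add: cube_empty good_empty)
next
  case (insert s D)
  have ps: "p s < k" using insert.prems unfolding cube_def by auto
  have pD: "p \<in> cube k D p" using insert.prems unfolding cube_def by auto
  have eq: "cube k (insert s D) b - {p} = (\<Union>y\<in>cube k D p. pline k y s (p s)) \<union> (cube k D p - {p})"
  proof (rule set_eqI, rule iffI)
    fix x assume x: "x \<in> cube k (insert s D) b - {p}"
    define y where "y = x(s := p s)"
    have y: "y \<in> cube k D p" using x insert.prems insert.hyps unfolding cube_def y_def by auto
    show "x \<in> (\<Union>y\<in>cube k D p. pline k y s (p s)) \<union> (cube k D p - {p})"
    proof (cases "x s = p s")
      case True
      then have "x = y" unfolding y_def by auto
      then show ?thesis using x y by auto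
    next
      case False
      have "x s < k" using x unfolding cube_def by auto
      moreover have "x = y(s := x s)" unfolding y_def by auto
      ultimately have "x \<in> pline k y s (p s)" using False unfolding pline_in by blast
      then show ?thesis using y by blast
    qed
  next
    fix x assume x: "x \<in> (\<Union>y\<in>cube k D p. pline k y s (p s)) \<union> (cube k D p - {p})"
    show "x \<in> cube k (insert s D) b - {p}"
    proof (cases "x \<in> cube k D p - {p}")
      case True
      then show ?thesis using insert.prems insert.hyps ps unfolding cube_def by auto
    next
      case False
      then obtain y u where y: "y \<in> cube k D p" "u < k" "u \<noteq> p s" "x = y(s:=u)"
        using x by (auto simp: pline_in)
      then show ?thesis using insert.prems insert.hyps unfolding cube_def by auto
    qed
  qed
  show ?case
    unfolding eq
  proof (rule good_Un)
    show "good k (\<Union>y\<in>cube k D p. pline k y s (p s))"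
    proof (rule good_UN)
      fix y assume "y \<in> cube k D p" then show "good k (pline k y s (p s))" using good_pline ps by blast
    next
      fix y y' assume y: "y \<in> cube k D p" and y': "y' \<in> cube k D p" and ne: "y \<noteq> y'"
      show "pline k y s (p s) \<inter> pline k y' s (p s) = {}"
      proof (rule ccontr)
        assume "pline k y s (p s) \<inter> pline k y' s (p s) \<noteq> {}"
        then obtain u u' where "y(s:=u) = y'(s:=u')" unfolding pline_def by blast
        then have "\<forall>j. j \<noteq> s \<longrightarrow> y j = y' j" by (metis fun_upd_other)
        moreover have "y s = y' s" using y y' insert.hyps unfolding cube_def by auto
        ultimately have "y = y'" by (metis ext)
        then show False using ne by blast
      qed
    qed
    show "good k (cube k D p - {p})" using insert.IH pD by blast
    show "(\<Union>y\<in>cube k D p. pline k y s (p s)) \<inter> (cube k D p - {p}) = {}"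
      using insert.hyps unfolding pline_def cube_def by auto
  qed
qed



definition ev :: "nat \<Rightarrow> nat \<Rightarrow> nat \<Rightarrow> nat" where
  "ev j u = (\<lambda>m. if m = j then u else 0)"

definition star :: "nat \<Rightarrow> nat set \<Rightarrow> (nat \<Rightarrow> nat) set" where
  "star k J = {zr} \<union> {ev j u | j u. j \<in> J \<and> u < k}"

lemma ev_apply: "ev j u m = (if m = j then u else 0)" unfolding ev_def by simp

lemma star_good:
  assumes "finite J" "1 \<le> k"
  shows "good k (cube k J zr - star k J)"
  using assms(1)
proof (induction J rule: finite_induct)
  case empty
  then show ?case by (simp add: cube_empty star_def good_empty)
next
  case (insert s J)
  have eq: "cube k (insert s J) zr - star k (insert s J)
      = (\<Union>y\<in>cube k J zr - {zr}. pline k y s 0) \<union> (cube k J zr - star k J)"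
  proof (rule set_eqI, rule iffI)
    fix x assume x: "x \<in> cube k (insert s J) zr - star k (insert s J)"
    define y where "y = x(s := 0)"
    have y: "y \<in> cube k J zr" using x insert.hyps unfolding cube_def y_def by auto
    show "x \<in> (\<Union>y\<in>cube k J zr - {zr}. pline k y s 0) \<union> (cube k J zr - star k J)"
    proof (cases "x s = 0")
      case True
      then have "x = y" unfolding y_def by auto
      moreover have "star k J \<subseteq> star k (insert s J)" unfolding star_def by auto
      ultimately show ?thesis using x y by auto
    next
      case False
      have xs: "x s < k" using x unfolding cube_def by auto
      have "y \<noteq> zr"
      proof
        assume "y = zr"
        then have "x = ev s (x s)" unfolding y_def ev_def
          by (metis fun_upd_apply)
        then have "x \<in> star k (insert s J)" using xs unfolding star_def by blast
        then show False using x by blast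
      qed
      moreover have "x = y(s := x s)" unfolding y_def by auto
      ultimately have "x \<in> pline k y s 0" using False xs unfolding pline_in by blast
      then show ?thesis using y \<open>y \<noteq> zr\<close> by blast
    qed
  next
    fix x assume x: "x \<in> (\<Union>y\<in>cube k J zr - {zr}. pline k y s 0) \<union> (cube k J zr - star k J)"
    show "x \<in> cube k (insert s J) zr - star k (insert s J)"
    proof (cases "x \<in> cube k J zr - star k J")
      case True
      then have xc: "x \<in> cube k J zr" and xn: "x \<notin> star k J" by auto
      have xs: "x s = 0" using xc insert.hyps unfolding cube_def by auto
      have "x \<in> cube k (insert s J) zr" using xc xs assms(2) unfolding cube_def by auto
      moreover have "x \<notin> star k (insert s J)"
      proof
        assume "x \<in> star k (insert s J)"
        then consider "x = zr" | j u where "j \<in> insert s J" "u < k" "x = ev j u"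
          unfolding star_def by blast
        then show False
        proof cases
          case 1 then show ?thesis using xn unfolding star_def by blast
        next
          case (2 j u)
          show ?thesis
          proof (cases "j = s")
            case True
            then have "u = 0" using 2 xs by (simp add: ev_apply)
            then have "x = zr" using 2 by (auto simp: ev_def)
            then show ?thesis using xn unfolding star_def by blast
          next
            case False
            then have "j \<in> J" using 2 by blast
            then show ?thesis using xn 2 unfolding star_def by blast
          qed
        qed
      qed
      ultimately show ?thesis by blast
    next
      case False
      then obtain y u where y: "y \<in> cube k J zr" "y \<noteq> zr" "u < k" "u \<noteq> 0" "x = y(s:=u)"
        using x by (auto simp: pline_in)
      have ys: "y s = 0" using y(1) insert.hyps unfolding cube_def by auto
      have "x \<in> cube k (insert s J) zr" using y unfolding cube_def by auto
      moreover have "x \<notin> star k (insert s J)"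
      proof
        assume "x \<in> star k (insert s J)"
        then consider "x = zr" | j v where "j \<in> insert s J" "v < k" "x = ev j v"
          unfolding star_def by blast
        then show False
        proof cases
          case 1 then show ?thesis using y by (metis fun_upd_same)
        next
          case (2 j v)
          show ?thesis
          proof (cases "j = s")
            case True
            have "y = zr"
            proof
              fix m show "y m = 0"
              proof (cases "m = s")
                case True then show ?thesis using ys by simp
              next
                case False
                then have "x m = 0" using 2 \<open>j = s\<close> by (simp add: ev_apply)
                then show ?thesis using y(5) False by simp
              qed
            qed
            then show ?thesis using y by blast
          next
            case False
            then have "x s = 0" using 2 by (simp add: ev_apply)
            then show ?thesis using y by simp
          qed
        qed
      qed
      ultimately show ?thesis by blast
    qed
  qed
  show ?case
    unfolding eq
  proof (rule good_Un)
    show "good k (\<Union>y\<in>cube k J zr - {zr}. pline k y s 0)"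
    proof (rule good_UN)
      fix y assume "y \<in> cube k J zr - {zr}" then show "good k (pline k y s 0)" using good_pline assms(2) by simp
    next
      fix y y' assume y: "y \<in> cube k J zr - {zr}" and y': "y' \<in> cube k J zr - {zr}" and ne: "y \<noteq> y'"
      show "pline k y s 0 \<inter> pline k y' s 0 = {}"
      proof (rule ccontr)
        assume "pline k y s 0 \<inter> pline k y' s 0 \<noteq> {}"
        then obtain u u' where "y(s:=u) = y'(s:=u')" unfolding pline_def by blast
        then have "\<forall>j. j \<noteq> s \<longrightarrow> y j = y' j" by (metis fun_upd_other)
        moreover have "y s = y' s" using y y' insert.hyps unfolding cube_def by auto
        ultimately have "y = y'" by (metis ext)
        then show False using ne by blast
      qed
    qed
    show "good k (cube k J zr - star k J)" using insert.IH by blast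
    show "(\<Union>y\<in>cube k J zr - {zr}. pline k y s 0) \<inter> (cube k J zr - star k J) = {}"
      using insert.hyps unfolding pline_def cube_def by auto
  qed
qed



lemma cube_bij:
  "bij_betw (\<lambda>x. restrict x F) (cube k F zr) (PiE F (\<lambda>_. {..<k}))"
proof (rule bij_betw_imageI)
  show "inj_on (\<lambda>x. restrict x F) (cube k F zr)"
  proof (rule inj_onI)
    fix x y assume x: "x \<in> cube k F zr" and y: "y \<in> cube k F zr" and e: "restrict x F = restrict y F"
    show "x = y"
    proof
      fix j show "x j = y j"
      proof (cases "j \<in> F")
        case True then show ?thesis using e by (metis restrict_apply')
      next
        case False then show ?thesis using x y unfolding cube_def by auto
      qed
    qed
  qed
  show "(\<lambda>x. restrict x F) ` cube k F zr = PiE F (\<lambda>_. {..<k})"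
  proof
    show "(\<lambda>x. restrict x F) ` cube k F zr \<subseteq> PiE F (\<lambda>_. {..<k})"
      unfolding cube_def by (auto simp: PiE_iff)
    show "PiE F (\<lambda>_. {..<k}) \<subseteq> (\<lambda>x. restrict x F) ` cube k F zr"
    proof
      fix f assume f: "f \<in> PiE F (\<lambda>_. {..<k})"
      define x where "x = (\<lambda>j. if j \<in> F then f j else 0)"
      have "x \<in> cube k F zr" using f unfolding x_def cube_def by auto
      moreover have "restrict x F = f" using f unfolding x_def
        by (auto simp: restrict_def PiE_def extensional_def)
      ultimately show "f \<in> (\<lambda>x. restrict x F) ` cube k F zr" by (metis image_eqI)
    qed
  qed
qed

lemma card_cube:
  assumes "finite F" shows "card (cube k F zr) = k ^ card F"
proof -
  have "card (cube k F zr) = card (PiE F (\<lambda>_. {..<k}))"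
    by (rule bij_betw_same_card[OF cube_bij])
  also have "\<dots> = (\<Prod>i\<in>F. card {..<k})" by (rule card_PiE[OF assms])
  also have "\<dots> = k ^ card F" by simp
  finally show ?thesis .
qed

lemma finite_cube:
  assumes "finite F" "1 \<le> k" shows "finite (cube k F zr)"
proof (rule ccontr)
  assume "infinite (cube k F zr)"
  then have "card (cube k F zr) = 0" by simp
  moreover have "card (cube k F zr) = k ^ card F" by (rule card_cube[OF assms(1)])
  ultimately show False using assms(2) by simp
qed

lemma card_pline: "p < k \<Longrightarrow> card (pline k x s p) = k - 1"
proof -
  assume p: "p < k"
  have "inj_on (\<lambda>u. x(s:=u)) ({..<k} - {p})"
  proof (rule inj_onI)
    fix u v assume "x(s:=u) = x(s:=v)"
    then have "(x(s:=u)) s = (x(s:=v)) s" by simp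
    then show "u = v" by simp
  qed
  then have "card (pline k x s p) = card ({..<k} - {p})" unfolding pline_def by (rule card_image)
  also have "\<dots> = k - 1" using p by simp
  finally show ?thesis .
qed


definition cors :: "nat \<Rightarrow> nat set \<Rightarrow> (nat \<Rightarrow> nat) set" where
  "cors k J = {ev j (k-1) | j. j \<in> J}"

lemma ev_inj: "ev j u = ev j' u' \<Longrightarrow> u \<noteq> 0 \<Longrightarrow> j = j' \<and> u = u'"
  unfolding ev_def by (metis)

lemma cube_sub_union:
  assumes "y \<in> cube k J zr" shows "cube k F y \<subseteq> cube k (J \<union> F) zr"
  using assms unfolding cube_def by auto

lemma cube_F_J:
  assumes "x \<in> cube k F y" "i \<notin> F" shows "x i = y i"
  using assms unfolding cube_def by auto

lemma cube_F_eq: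
  assumes "x \<in> cube k F y" "x \<in> cube k J zr" "y \<in> cube k J zr" "J \<inter> F = {}"
  shows "x = y"
proof
  fix i show "x i = y i"
  proof (cases "i \<in> F")
    case True
    then have "i \<notin> J" using assms(4) by blast
    then show ?thesis using assms(2,3) unfolding cube_def by auto
  next
    case False then show ?thesis using assms(1) unfolding cube_def by auto
  qed
qed

lemma cube_F_disj:
  assumes "y \<in> cube k J zr" "y' \<in> cube k J zr" "y \<noteq> y'" "J \<inter> F = {}"
  shows "cube k F y \<inter> cube k F y' = {}"
proof (rule ccontr)
  assume "cube k F y \<inter> cube k F y' \<noteq> {}"
  then obtain x where x: "x \<in> cube k F y" "x \<in> cube k F y'" by blast
  have "y = y'"
  proof
    fix i show "y i = y' i"
    proof (cases "i \<in> F")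
      case True
      then have "i \<notin> J" using assms(4) by blast
      then show ?thesis using assms(1,2) unfolding cube_def by auto
    next
      case False then show ?thesis using x unfolding cube_def by auto
    qed
  qed
  then show False using assms(3) by blast
qed

lemma star_sub: "1 \<le> k \<Longrightarrow> star k J \<subseteq> cube k J zr"
  unfolding star_def cube_def ev_def by auto

lemma cors_sub_star: "1 \<le> k \<Longrightarrow> cors k J \<subseteq> star k J"
proof
  fix x assume k: "1 \<le> k" and "x \<in> cors k J"
  then obtain j where "j \<in> J" "x = ev j (k-1)" unfolding cors_def by blast
  moreover have "k - 1 < k" using k by simp
  ultimately show "x \<in> star k J" unfolding star_def by blast
qed

lemma prJ_cube:
  assumes "x \<in> cube k (J \<union> F) zr"
  shows "(\<lambda>i. if i \<in> J then x i else 0) \<in> cube k J zr"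
    and "x \<in> cube k F (\<lambda>i. if i \<in> J then x i else 0)"
  using assms unfolding cube_def by auto

lemma zF_upd_in:
  assumes "z \<in> cube k F zr" "j \<in> J" "J \<inter> F = {}" "z(j:=u) \<in> cube k F y" "y \<in> cube k J zr"
  shows "y = ev j u"
proof
  fix i show "y i = ev j u i"
  proof (cases "i \<in> F")
    case True
    then have "i \<notin> J" "i \<noteq> j" using assms(2,3) by blast+
    then show ?thesis using assms(5) unfolding cube_def ev_def by auto
  next
    case False
    then have "y i = (z(j:=u)) i" using cube_F_J[OF assms(4)] by simp
    moreover have "z i = 0" using False assms(1) unfolding cube_def by auto
    ultimately show ?thesis unfolding ev_def by auto
  qed
qed

lemma zF_upd_mem:
  assumes "z \<in> cube k F zr" "j \<in> J" "J \<inter> F = {}" "u < k"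
  shows "z(j:=u) \<in> cube k F (ev j u)"
  using assms unfolding cube_def ev_def by auto



lemma bstep:
  assumes fJ: "finite J" and fF: "finite F" and disj: "J \<inter> F = {}" and k: "3 \<le> k"
    and cardJ: "card J \<le> k ^ card F - 1" and dvdJ: "(k - 1) dvd card J"
  shows "good k (cube k (J \<union> F) zr - ({zr} \<union> cors k J))"
proof -
  have k1: "1 \<le> k" using k by simp
  have zF: "zr \<in> cube k F zr" using k unfolding cube_def by auto
  have "good k (cube k F zr - {zr})" by (rule cube_remove_point[OF fF zF])
  then obtain P where Pl: "\<forall>A\<in>P. \<exists>x s p. p < k \<and> A = pline k x s p"
      and Pd: "pairwise disjnt P" and PU: "\<Union>P = cube k F zr - {zr}"
    unfolding good_def by blast
  have fcube: "finite (cube k F zr)" by (rule finite_cube[OF fF k1])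
  have fP: "finite P"
  proof (rule finite_subset)
    show "P \<subseteq> Pow (cube k F zr)" using PU by blast
    show "finite (Pow (cube k F zr))" using fcube by simp
  qed
  have cA: "card A = k - 1" if "A \<in> P" for A
  proof -
    have "\<exists>x s p. p < k \<and> A = pline k x s p" using Pl that by (rule bspec)
    then obtain x s p where "p < k \<and> A = pline k x s p" by blast
    then show ?thesis by (simp add: card_pline)
  qed
  have fA: "\<And>A. A \<in> P \<Longrightarrow> finite A"
  proof -
    fix A assume "A \<in> P"
    then have "A \<subseteq> cube k F zr" using PU by blast
    then show "finite A" using fcube by (rule finite_subset)
  qed
  have "card (\<Union>P) = sum card P" by (rule card_Union_disjoint[OF Pd fA])
  also have "\<dots> = sum (\<lambda>_. k - 1) P" by (rule sum.cong) (auto simp: cA)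
  also have "\<dots> = (k - 1) * card P" by simp
  finally have c1: "card (\<Union>P) = (k - 1) * card P" .
  have "card (\<Union>P) = card (cube k F zr) - 1" unfolding PU using zF by (rule card_Diff_singleton)
  also have "\<dots> = k ^ card F - 1" by (simp add: card_cube[OF fF])
  finally have "card (\<Union>P) = k ^ card F - 1" .
  with c1 have cP: "(k - 1) * card P = k ^ card F - 1" by simp
  define n where "n = card J div (k - 1)"
  have nJ: "(k - 1) * n = card J" unfolding n_def using dvdJ by simp
  have "n \<le> card P"
  proof -
    have "(k - 1) * n \<le> (k - 1) * card P" using nJ cP cardJ by simp
    then show ?thesis using k by simp
  qed
  then obtain P' where P'P: "P' \<subseteq> P" and cP': "card P' = n" and fP': "finite P'"
    by (rule obtain_subset_with_card_n)
  define W where "W = \<Union>P'"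
  have WP: "W \<subseteq> cube k F zr - {zr}" unfolding W_def using P'P PU by blast
  have fW: "finite W" using WP fcube by (simp add: finite_subset)
  have "card W = sum card P'" unfolding W_def
  proof (rule card_Union_disjoint)
    show "pairwise disjnt P'" using Pd P'P by (rule pairwise_subset)
    show "\<And>A. A \<in> P' \<Longrightarrow> finite A" using fA P'P by blast
  qed
  also have "\<dots> = sum (\<lambda>_. k - 1) P'" by (rule sum.cong) (use cA P'P in auto)
  also have "\<dots> = (k - 1) * n" using cP' by simp
  finally have cW: "card W = card J" using nJ by simp
  obtain g where g: "bij_betw g W J" using finite_same_card_bij[OF fW fJ cW] by blast
  define h where "h = inv_into W g"
  have gWJ: "g ` W = J" using g by (simp add: bij_betw_def)
  have gW: "g z \<in> J" if "z \<in> W" for z using that gWJ by auto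
  have hJ: "h j \<in> W" if "j \<in> J" for j unfolding h_def
    by (rule inv_into_into) (use gWJ that in simp)
  have gh: "g (h j) = j" if "j \<in> J" for j unfolding h_def
    by (rule bij_betw_inv_into_right[OF g that])
  have hg: "h (g z) = z" if "z \<in> W" for z unfolding h_def
    by (rule bij_betw_inv_into_left[OF g that])
  define X where "X = cube k (J \<union> F) zr - ({zr} \<union> cors k J)"
  define HP where "HP = (\<Union>z\<in>W. pline k z (g z) (k-1))"
  define HJ where "HJ = cube k J zr - star k J"
  define H where "H = HP \<union> HJ"
  have Wc: "z \<in> cube k F zr" "z \<noteq> zr" if "z \<in> W" for z using WP that by blast+
  have nzF: "\<exists>i\<in>F. z i \<noteq> 0" if "z \<in> cube k F zr" "z \<noteq> zr" for z
  proof (rule ccontr)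
    assume "\<not> (\<exists>i\<in>F. z i \<noteq> 0)"
    then have "z = zr" using that(1) unfolding cube_def by auto
    then show False using that(2) by blast
  qed
  have zgz: "z (g z) = 0" if "z \<in> W" for z
  proof -
    have "g z \<notin> F" using gW[OF that] disj by blast
    then show ?thesis using Wc(1)[OF that] unfolding cube_def by auto
  qed
  have HP_iff: "x \<in> HP \<longleftrightarrow> (\<exists>z\<in>W. \<exists>u. u < k - 1 \<and> x = z(g z := u))" for x
  proof -
    have e1: "\<And>u. (u < k \<and> u \<noteq> k - 1) \<longleftrightarrow> u < k - 1" using k by auto
    have "x \<in> HP \<longleftrightarrow> (\<exists>z\<in>W. x \<in> pline k z (g z) (k-1))" unfolding HP_def by simp
    also have "\<dots> \<longleftrightarrow> (\<exists>z\<in>W. \<exists>u. (u < k \<and> u \<noteq> k - 1) \<and> x = z(g z := u))" unfolding pline_in by simp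
    also have "\<dots> \<longleftrightarrow> (\<exists>z\<in>W. \<exists>u. u < k - 1 \<and> x = z(g z := u))" unfolding e1 by simp
    finally show ?thesis .
  qed
  have zrJ: "zr \<in> cube k J zr" using k unfolding cube_def by auto
  have zr_star: "zr \<in> star k J" unfolding star_def by blast
  have cors_sub: "cors k J \<subseteq> cube k J zr" using cors_sub_star[OF k1] star_sub[OF k1] by blast
  have HP_X: "HP \<subseteq> X"
  proof
    fix x assume "x \<in> HP"
    then obtain z u where z: "z \<in> W" "u < k - 1" "x = z(g z := u)" unfolding HP_iff by blast
    obtain i where i: "i \<in> F" "z i \<noteq> 0" using nzF[OF Wc(1)[OF z(1)] Wc(2)[OF z(1)]] by blast
    have gzJ: "g z \<in> J" using gW z(1) by blast
    have ig: "i \<noteq> g z" using gzJ i(1) disj by blast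
    have xi: "x i \<noteq> 0" using z(3) ig i(2) by simp
    have "x \<in> cube k (J \<union> F) zr" using z gzJ Wc(1)[OF z(1)] unfolding cube_def by auto
    moreover have "x \<noteq> zr" using xi by auto
    moreover have "x \<notin> cors k J"
    proof
      assume "x \<in> cors k J"
      then obtain j where "j \<in> J" "x = ev j (k-1)" unfolding cors_def by blast
      moreover have "i \<noteq> j" using \<open>j \<in> J\<close> i(1) disj by blast
      ultimately have "x i = 0" by (simp add: ev_apply)
      then show False using xi by blast
    qed
    ultimately show "x \<in> X" unfolding X_def by blast
  qed
  have HJ_X: "HJ \<subseteq> X"
  proof
    fix x assume x: "x \<in> HJ"
    have "x \<in> cube k (J \<union> F) zr" using x k1 unfolding HJ_def cube_def by auto
    moreover have "x \<noteq> zr" using x zr_star unfolding HJ_def by blast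
    moreover have "x \<notin> cors k J" using x cors_sub_star[OF k1] unfolding HJ_def by blast
    ultimately show "x \<in> X" unfolding X_def by blast
  qed
  have HPJ: "HP \<inter> HJ = {}"
  proof (rule ccontr)
    assume "HP \<inter> HJ \<noteq> {}"
    then obtain x where xP: "x \<in> HP" and xJ: "x \<in> HJ" by blast
    then obtain z u where z: "z \<in> W" "u < k - 1" "x = z(g z := u)" unfolding HP_iff by blast
    obtain i where i: "i \<in> F" "z i \<noteq> 0" using nzF[OF Wc(1)[OF z(1)] Wc(2)[OF z(1)]] by blast
    have ig: "i \<noteq> g z" using gW[OF z(1)] i(1) disj by blast
    have "x i \<noteq> 0" using z(3) ig i(2) by simp
    moreover have "i \<notin> J" using i(1) disj by blast
    ultimately show False using xJ unfolding HJ_def cube_def by auto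
  qed
  have goodHP: "good k HP" unfolding HP_def
  proof (rule good_UN)
    fix z assume "z \<in> W" show "good k (pline k z (g z) (k - 1))" using k by (intro good_pline) simp
  next
    fix z z' assume z: "z \<in> W" and z': "z' \<in> W" and ne: "z \<noteq> z'"
    show "pline k z (g z) (k - 1) \<inter> pline k z' (g z') (k - 1) = {}"
    proof (rule ccontr)
      assume "pline k z (g z) (k - 1) \<inter> pline k z' (g z') (k - 1) \<noteq> {}"
      then obtain u u' where e: "z(g z := u) = z'(g z' := u')" unfolding pline_def by blast
      have "z = z'"
      proof
        fix i show "z i = z' i"
        proof (cases "i \<in> F")
          case True
          then have "i \<noteq> g z" "i \<noteq> g z'" using gW[OF z] gW[OF z'] disj by blast+
          then show ?thesis using fun_cong[OF e, of i] by simp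
        next
          case False
          then show ?thesis using Wc(1)[OF z] Wc(1)[OF z'] unfolding cube_def by auto
        qed
      qed
      then show False using ne by blast
    qed
  qed
  have goodHJ: "good k HJ" unfolding HJ_def by (rule star_good[OF fJ k1])
  have goodH: "good k H" unfolding H_def by (rule good_Un[OF goodHP goodHJ HPJ])
  have HX: "H \<subseteq> X" unfolding H_def using HP_X HJ_X by blast
  define V where "V = (\<lambda>y. (X - H) \<inter> cube k F y)"
  have XHU: "X - H = (\<Union>y\<in>cube k J zr. V y)"
  proof
    show "X - H \<subseteq> (\<Union>y\<in>cube k J zr. V y)"
    proof
      fix x assume x: "x \<in> X - H"
      then have "x \<in> cube k (J \<union> F) zr" unfolding X_def by blast
      then show "x \<in> (\<Union>y\<in>cube k J zr. V y)" using prJ_cube[of x k J F] x unfolding V_def by blast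
    qed
    show "(\<Union>y\<in>cube k J zr. V y) \<subseteq> X - H" unfolding V_def by blast
  qed
  have Vgood: "good k (V y)" if y: "y \<in> cube k J zr" for y
  proof (cases "y = zr")
    case True
    have "V y = (cube k F zr - {zr}) - W"
    proof
      show "V y \<subseteq> (cube k F zr - {zr}) - W"
      proof
        fix x assume x: "x \<in> V y"
        then have xc: "x \<in> cube k F zr" and xX: "x \<in> X" and xH: "x \<notin> H"
          unfolding V_def True by auto
        have "x \<noteq> zr" using xX unfolding X_def by blast
        moreover have "x \<notin> W"
        proof
          assume xW: "x \<in> W"
          have "0 < k - 1" using k by simp
          moreover have "x = x(g x := 0)" using zgz[OF xW] by (metis fun_upd_triv)
          ultimately have "x \<in> HP" unfolding HP_iff using xW by blast
          then show False using xH unfolding H_def by blast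
        qed
        ultimately show "x \<in> (cube k F zr - {zr}) - W" using xc by blast
      qed
      show "(cube k F zr - {zr}) - W \<subseteq> V y"
      proof
        fix x assume x: "x \<in> (cube k F zr - {zr}) - W"
        have xc: "x \<in> cube k F zr" using x by blast
        have "x \<in> cube k (J \<union> F) zr" using cube_sub_union[OF zrJ] xc by blast
        moreover have "x \<noteq> zr" using x by blast
        moreover have "x \<notin> cors k J"
        proof
          assume "x \<in> cors k J"
          then have "x \<in> cube k J zr" using cors_sub by blast
          then have "x = zr" using cube_F_eq[OF xc _ zrJ disj] by blast
          then show False using x by blast
        qed
        ultimately have xX: "x \<in> X" unfolding X_def by blast
        have "x \<notin> HJ"
        proof
          assume "x \<in> HJ"
          then have "x \<in> cube k J zr" unfolding HJ_def by blast
          then have "x = zr" using cube_F_eq[OF xc _ zrJ disj] by blast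
          then show False using x by blast
        qed
        moreover have "x \<notin> HP"
        proof
          assume "x \<in> HP"
          then obtain z u where z: "z \<in> W" "u < k - 1" "x = z(g z := u)" unfolding HP_iff by blast
          have "zr = ev (g z) u"
            using zF_upd_in[OF Wc(1)[OF z(1)] gW[OF z(1)] disj _ zrJ] xc z(3) by blast
          then have "u = 0" using fun_cong[of zr "ev (g z) u" "g z"] by (simp add: ev_apply)
          then have "x = z" using z(3) zgz[OF z(1)] by (simp add: fun_upd_idem_iff)
          then show False using x z(1) by blast
        qed
        ultimately have "x \<notin> H" unfolding H_def by blast
        then show "x \<in> V y" using xX xc unfolding V_def True by blast
      qed
    qed
    also have "\<dots> = \<Union>(P - P')"
    proof
      show "cube k F zr - {zr} - W \<subseteq> \<Union>(P - P')" unfolding W_def PU[symmetric] by blast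
      show "\<Union>(P - P') \<subseteq> cube k F zr - {zr} - W"
      proof
        fix x assume "x \<in> \<Union>(P - P')"
        then obtain A where A: "A \<in> P" "A \<notin> P'" "x \<in> A" by blast
        have "x \<notin> W"
        proof
          assume "x \<in> W"
          then obtain B where B: "B \<in> P'" "x \<in> B" unfolding W_def by blast
          have "B \<in> P" "A \<noteq> B" using B A P'P by blast+
          then have "disjnt A B" using Pd A(1) unfolding pairwise_def by blast
          then show False using A(3) B(2) unfolding disjnt_def by blast
        qed
        then show "x \<in> cube k F zr - {zr} - W" using A PU by blast
      qed
    qed
    finally have eqV: "V y = \<Union>(P - P')" .
    have "good k (\<Union>(P - P'))" unfolding good_def
    proof (intro exI[of _ "P - P'"] conjI)
      show "\<forall>A\<in>P - P'. \<exists>x s p. p < k \<and> A = pline k x s p" using Pl by blast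
      show "pairwise disjnt (P - P')" using Pd by (rule pairwise_subset) blast
    qed simp
    then show ?thesis unfolding eqV .
  next
    case False
    have yy: "y \<in> cube k F y" using y k1 unfolding cube_def by auto
    have ga: "x \<in> cube k (J \<union> F) zr" if "x \<in> cube k F y" for x using cube_sub_union[OF y] that by blast
    have gb: "x \<noteq> zr" if "x \<in> cube k F y" for x
    proof
      assume "x = zr"
      then have "zr \<in> cube k F y" using that by simp
      then have "zr \<in> cube k F y \<and> zr \<in> cube k J zr" using zrJ by blast
      then have "zr = y" using cube_F_eq[OF _ _ y disj] by blast
      then show False using False by simp
    qed
    have gc: "x = y" if "x \<in> cube k F y" "x \<in> cube k J zr" for x using cube_F_eq[OF that y disj] .
    have ge: "\<exists>z\<in>W. \<exists>u. 0 < u \<and> u < k - 1 \<and> y = ev (g z) u \<and> x = z(g z := u)"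
      if xc0: "x \<in> cube k F y" and xh0: "x \<in> HP" for x
    proof -
      obtain z u where z: "z \<in> W" "u < k - 1" "x = z(g z := u)" using xh0 unfolding HP_iff by blast
      have ye: "y = ev (g z) u" using zF_upd_in[OF Wc(1)[OF z(1)] gW[OF z(1)] disj _ y] xc0 z(3) by blast
      have "u \<noteq> 0"
      proof
        assume "u = 0"
        then have "y = zr" using ye by (simp add: ev_def)
        then show False using False by blast
      qed
      then show ?thesis using z ye by blast
    qed
    have Vrm: "V y = cube k F y - {q}"
      if qH: "q \<notin> X - H" and memb: "\<And>x. x \<in> cube k F y \<Longrightarrow> x \<noteq> q \<Longrightarrow> x \<notin> cors k J \<and> x \<notin> HJ \<and> x \<notin> HP" for q
    proof
      show "V y \<subseteq> cube k F y - {q}" using qH unfolding V_def by blast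
      show "cube k F y - {q} \<subseteq> V y"
      proof
        fix x assume x: "x \<in> cube k F y - {q}"
        then have xc: "x \<in> cube k F y" and xq: "x \<noteq> q" by blast+
        have "x \<in> X" using ga[OF xc] gb[OF xc] memb[OF xc xq] unfolding X_def by blast
        moreover have "x \<notin> H" using memb[OF xc xq] unfolding H_def by blast
        ultimately show "x \<in> V y" using xc unfolding V_def by blast
      qed
    qed
    show ?thesis
    proof (cases "y \<in> star k J")
      case False
      have yH: "y \<in> H" using y False unfolding H_def HJ_def by blast
      have "V y = cube k F y - {y}"
      proof (rule Vrm)
        show "y \<notin> X - H" using yH by blast
        fix x assume xc: "x \<in> cube k F y" and xy: "x \<noteq> y"
        have "x \<notin> cors k J" using gc[OF xc] cors_sub xy by blast
        moreover have "x \<notin> HJ" using gc[OF xc] xy unfolding HJ_def by blast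
        moreover have "x \<notin> HP"
        proof
          assume "x \<in> HP"
          then obtain z u where "z \<in> W" "u < k - 1" "y = ev (g z) u" using ge[OF xc] by blast
          then have "y \<in> star k J" using gW unfolding star_def by fastforce
          then show False using False by blast
        qed
        ultimately show "x \<notin> cors k J \<and> x \<notin> HJ \<and> x \<notin> HP" by blast
      qed
      then show ?thesis using cube_remove_point[OF fF yy] by simp
    next
      case True
      then obtain j u where ju: "j \<in> J" "u < k" "y = ev j u" using \<open>y \<noteq> zr\<close> unfolding star_def by blast
      have u0: "u \<noteq> 0"
      proof
        assume "u = 0" then have "y = zr" using ju by (simp add: ev_def)
        then show False using \<open>y \<noteq> zr\<close> by blast
      qed
      show ?thesis
      proof (cases "u = k - 1")
        case True
        have ycors: "y \<in> cors k J" using ju True unfolding cors_def by blast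
        have "V y = cube k F y - {y}"
        proof (rule Vrm)
          show "y \<notin> X - H" using ycors unfolding X_def by blast
          fix x assume xc: "x \<in> cube k F y" and xy: "x \<noteq> y"
          have "x \<notin> cors k J" using gc[OF xc] cors_sub xy by blast
          moreover have "x \<notin> HJ" using gc[OF xc] xy unfolding HJ_def by blast
          moreover have "x \<notin> HP"
          proof
            assume "x \<in> HP"
            then obtain z u' where "z \<in> W" "u' < k - 1" "y = ev (g z) u'" using ge[OF xc] by blast
            then have "ev j (k-1) = ev (g z) u'" using ju True by simp
            then have "k - 1 = u'" using ev_inj k by simp
            then show False using \<open>u' < k - 1\<close> by simp
          qed
          ultimately show "x \<notin> cors k J \<and> x \<notin> HJ \<and> x \<notin> HP" by blast
        qed
        then show ?thesis using cube_remove_point[OF fF yy] by simp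
      next
        case False
        define q where "q = (h j)(j := u)"
        have hjW: "h j \<in> W" by (rule hJ[OF ju(1)])
        have uk: "u < k - 1" using ju(2) False by simp
        have qHP: "q \<in> HP" unfolding HP_iff q_def using hjW uk gh[OF ju(1)] by metis
        have qc: "q \<in> cube k F y" unfolding q_def ju(3)
          by (rule zF_upd_mem[OF Wc(1)[OF hjW] ju(1) disj ju(2)])
        have "V y = cube k F y - {q}"
        proof (rule Vrm)
          show "q \<notin> X - H" using qHP unfolding H_def by blast
          fix x assume xc: "x \<in> cube k F y" and xq: "x \<noteq> q"
          have "y \<notin> cors k J"
          proof
            assume "y \<in> cors k J"
            then obtain j' where "j' \<in> J" "y = ev j' (k-1)" unfolding cors_def by blast
            then have "ev j u = ev j' (k-1)" using ju by simp
            then have "u = k - 1" using ev_inj u0 by blast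
            then show False using False by blast
          qed
          then have "x \<notin> cors k J" using gc[OF xc] cors_sub by blast
          moreover have "x \<notin> HJ" using gc[OF xc] True unfolding HJ_def by blast
          moreover have "x \<notin> HP"
          proof
            assume "x \<in> HP"
            then obtain z u' where z: "z \<in> W" "u' < k - 1" "y = ev (g z) u'" "x = z(g z := u')"
              using ge[OF xc] by blast
            have "ev j u = ev (g z) u'" using ju z by simp
            then have "j = g z \<and> u = u'" using ev_inj u0 by blast
            then have "x = q" unfolding q_def using z hg[OF z(1)] by simp
            then show False using xq by blast
          qed
          ultimately show "x \<notin> cors k J \<and> x \<notin> HJ \<and> x \<notin> HP" by blast
        qed
        then show ?thesis using cube_remove_point[OF fF qc] by simp
      qed
    qed
  qed
  have goodXH: "good k (X - H)" unfolding XHU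
  proof (rule good_UN)
    show "\<And>y. y \<in> cube k J zr \<Longrightarrow> good k (V y)" by (rule Vgood)
    fix y y' assume "y \<in> cube k J zr" "y' \<in> cube k J zr" "y \<noteq> y'"
    then have "cube k F y \<inter> cube k F y' = {}" using disj by (rule cube_F_disj)
    then show "V y \<inter> V y' = {}" unfolding V_def by blast
  qed
  have "(X - H) \<inter> H = {}" by blast
  from good_Un[OF goodXH goodH this] have "good k ((X - H) \<union> H)" .
  moreover have "(X - H) \<union> H = X" using HX by blast
  ultimately show ?thesis unfolding X_def by simp
qed



lemma astep:
  assumes fD: "finite D" and sJ: "s \<in> J" and JD: "J \<subseteq> D" and k: "3 \<le> k"
    and cardJ: "card (J - {s}) \<le> k ^ card (D - J) - 1" and dvdJ: "(k - 1) dvd card (J - {s})"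
  shows "good k (cube k D zr - cors k J)"
proof -
  have k1: "1 \<le> k" using k by simp
  define D' where "D' = D - {s}"
  define J' where "J' = J - {s}"
  define A where "A = (\<lambda>y. pline k y s (if y = zr then k - 1 else 0))"
  define R where "R = cube k D' zr - ({zr} \<union> cors k J')"
  have D'eq: "D' = J' \<union> (D - J)" unfolding D'_def J'_def using sJ JD by blast
  have goodR: "good k R" unfolding R_def D'eq
  proof (rule bstep)
    show "finite J'" unfolding J'_def using JD fD finite_subset by blast
    show "finite (D - J)" using fD by simp
    show "J' \<inter> (D - J) = {}" unfolding J'_def by blast
  qed (use k cardJ dvdJ in \<open>auto simp: J'_def\<close>)
  have sD': "s \<notin> D'" unfolding D'_def by blast
  have sD: "s \<in> D" using sJ JD by blast
  have eq: "cube k D zr - cors k J = (\<Union>y\<in>cube k D' zr. A y) \<union> R"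
  proof (rule set_eqI, rule iffI)
    fix x assume x: "x \<in> cube k D zr - cors k J"
    define y where "y = x(s := 0)"
    have y: "y \<in> cube k D' zr" using x unfolding cube_def y_def D'_def by auto
    have xs: "x s < k" using x sD unfolding cube_def by auto
    show "x \<in> (\<Union>y\<in>cube k D' zr. A y) \<union> R"
    proof (cases "x s = 0")
      case True
      then have xy: "x = y" unfolding y_def by (metis fun_upd_triv)
      show ?thesis
      proof (cases "x = zr")
        case True
        have "x = zr(s := 0)" using True by (simp add: fun_eq_iff)
        moreover have "(0::nat) < k \<and> 0 \<noteq> k - 1" using k by simp
        ultimately have "x \<in> A zr" unfolding A_def pline_in by auto
        then show ?thesis using y xy True by blast
      next
        case False
        have "cors k J' \<subseteq> cors k J" unfolding cors_def J'_def by blast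
        then have "x \<in> R" using x y xy False unfolding R_def by blast
        then show ?thesis by blast
      qed
    next
      case False
      have xe: "x = y(s := x s)" unfolding y_def by simp
      show ?thesis
      proof (cases "y = zr")
        case True
        have "x s \<noteq> k - 1"
        proof
          assume "x s = k - 1"
          then have "x = ev s (k-1)" using xe True unfolding ev_def by auto
          then have "x \<in> cors k J" unfolding cors_def using sJ by blast
          then show False using x by blast
        qed
        then have "x \<in> A y" unfolding A_def pline_in using True xe xs by auto
        then show ?thesis using y by blast
      next
        case yz: False
        then have "x \<in> A y" unfolding A_def pline_in using xe xs False by auto
        then show ?thesis using y by blast
      qed
    qed
  next
    fix x assume x: "x \<in> (\<Union>y\<in>cube k D' zr. A y) \<union> R"
    show "x \<in> cube k D zr - cors k J"
    proof (cases "x \<in> R")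
      case True
      then have xc: "x \<in> cube k D' zr" and xn: "x \<notin> cors k J'" unfolding R_def by auto
      have xs: "x s = 0" using xc sD' unfolding cube_def by auto
      have "x \<in> cube k D zr" using xc k1 unfolding cube_def D'_def by auto
      moreover have "x \<notin> cors k J"
      proof
        assume "x \<in> cors k J"
        then obtain j where j: "j \<in> J" "x = ev j (k-1)" unfolding cors_def by blast
        show False
        proof (cases "j = s")
          case True
          then have "x s = k - 1" using j by (simp add: ev_apply)
          then show False using xs k by simp
        next
          case False
          then have "x \<in> cors k J'" using j unfolding cors_def J'_def by blast
          then show False using xn by blast
        qed
      qed
      ultimately show ?thesis by blast
    next
      case False
      then obtain y where y: "y \<in> cube k D' zr" "x \<in> A y" using x by blast
      then obtain u where u: "u < k" "u \<noteq> (if y = zr then k - 1 else 0)" "x = y(s := u)"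
        unfolding A_def pline_in by blast
      have "x \<in> cube k D zr" using y(1) u sD unfolding cube_def D'_def by auto
      moreover have "x \<notin> cors k J"
      proof
        assume "x \<in> cors k J"
        then obtain j where j: "j \<in> J" "x = ev j (k-1)" unfolding cors_def by blast
        show False
        proof (cases "j = s")
          case True
          then have us: "u = k - 1" using j u(3) by (metis ev_apply fun_upd_same)
          have "y = zr"
          proof
            fix m show "y m = zr m"
            proof (cases "m = s")
              case True then show ?thesis using y(1) sD' unfolding cube_def by auto
            next
              case False
              then have "x m = 0" using j \<open>j = s\<close> by (simp add: ev_apply)
              then show ?thesis using u(3) False by simp
            qed
          qed
          then show False using u(2) us by simp
        next
          case False
          then have "x s = 0" using j by (simp add: ev_apply)
          then have "u = 0" using u(3) by simp
          moreover have "x j = k - 1" using j by (simp add: ev_apply)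
          ultimately have "y j = k - 1" using u(3) False by simp
          then have "y \<noteq> zr" using k by auto
          then show False using u(2) \<open>u = 0\<close> by simp
        qed
      qed
      ultimately show ?thesis by blast
    qed
  qed
  show ?thesis unfolding eq
  proof (rule good_Un[OF good_UN goodR])
    fix y assume "y \<in> cube k D' zr"
    show "good k (A y)" unfolding A_def by (rule good_pline) (use k in auto)
  next
    fix y y' assume y: "y \<in> cube k D' zr" and y': "y' \<in> cube k D' zr" and ne: "y \<noteq> y'"
    show "A y \<inter> A y' = {}"
    proof (rule ccontr)
      assume "A y \<inter> A y' \<noteq> {}"
      then obtain u u' where e: "y(s:=u) = y'(s:=u')" unfolding A_def pline_def by blast
      have "y = y'"
      proof
        fix m show "y m = y' m"
        proof (cases "m = s")
          case True then show ?thesis using y y' sD' unfolding cube_def by auto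
        next
          case False then show ?thesis using fun_cong[OF e, of m] by simp
        qed
      qed
      then show False using ne by blast
    qed
  next
    show "(\<Union>y\<in>cube k D' zr. A y) \<inter> R = {}"
    proof (rule ccontr)
      assume "(\<Union>y\<in>cube k D' zr. A y) \<inter> R \<noteq> {}"
      then obtain x y where y: "y \<in> cube k D' zr" "x \<in> A y" "x \<in> R" by blast
      then obtain u where u: "u < k" "u \<noteq> (if y = zr then k - 1 else 0)" "x = y(s := u)"
        unfolding A_def pline_in by blast
      have "x s = 0" using y(3) sD' unfolding R_def cube_def by auto
      then have u0: "u = 0" using u(3) by simp
      have ys: "y s = 0" using y(1) sD' unfolding cube_def by auto
      then have "x = y" using u(3) u0 by (metis fun_upd_triv)
      show False
      proof (cases "y = zr")
        case True
        then show False using \<open>x = y\<close> y(3) unfolding R_def by blast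
      next
        case False
        then show False using u(2) u0 by simp
      qed
    qed
  qed
qed



lemma mod_image:
  fixes k i p c :: nat
  assumes "0 < k" "1 \<le> i" "i \<le> k" "p < k" "c = (p + (k - i)) mod k"
  shows "(\<lambda>t. (c + t) mod k) ` ({1..k} - {i}) = {..<k} - {p}"
proof -
  define f where "f = (\<lambda>t. (c + t) mod k)"
  have inj: "inj_on f {1..k}"
  proof (rule inj_onI)
    fix t t' assume t: "t \<in> {1..k}" and t': "t' \<in> {1..k}" and e: "f t = f t'"
    have ck: "c < k" using assms(1,5) by simp
    have fm: "f t = (if c + t < k then c + t else c + t - k)" if "t \<in> {1..k}" for t
    proof (cases "c + t < k")
      case True then show ?thesis unfolding f_def by simp
    next
      case False
      then have "(c + t) mod k = (c + t - k) mod k" by (simp add: le_mod_geq)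
      also have "\<dots> = c + t - k"
      proof (rule mod_less)
        show "c + t - k < k" using ck that by auto
      qed
      finally show ?thesis using False unfolding f_def by simp
    qed
    show "t = t'" using e fm[OF t] fm[OF t'] t t' ck by (auto split: if_splits)
  qed
  have "f ` {1..k} \<subseteq> {..<k}" unfolding f_def using assms(1) by auto
  moreover have "card (f ` {1..k}) = card {..<k}" using card_image[OF inj] by simp
  ultimately have full: "f ` {1..k} = {..<k}" by (intro card_subset_eq) auto
  have fi: "f i = p"
  proof -
    have "f i = ((p + (k - i)) mod k + i) mod k" unfolding f_def assms(5) ..
    also have "\<dots> = (p + (k - i) + i) mod k" by (simp add: mod_add_left_eq)
    also have "\<dots> = (p + k) mod k" using assms(3) by simp
    also have "\<dots> = p" using assms(4) by simp
    finally show ?thesis .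
  qed
  have "f ` ({1..k} - {i}) = f ` {1..k} - f ` {i}"
    by (rule inj_on_image_set_diff[OF inj]) (use assms in auto)
  then have "f ` ({1..k} - {i}) = {..<k} - {p}" using full fi by simp
  then show ?thesis unfolding f_def .
qed

lemma grid_cube: "grid k d = cube k {..<d} zr"
  unfolding grid_def cube_def by auto

lemma pline_copy:
  assumes sub: "pline k x s p \<subseteq> grid k d" and p: "p < k" and k: "3 \<le> k" and i: "1 \<le> i" "i \<le> k"
  shows "copy_of k d ({1..k} - {i}) (pline k x s p)"
proof -
  define u where "u = (if p = 1 then 2 else (1::nat))"
  have u: "u \<in> {1,2}" "u \<noteq> p" unfolding u_def by auto
  have uk: "u < k" using u k by auto
  have "x(s:=u) \<in> pline k x s p" unfolding pline_in using u uk by blast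
  then have x0: "x(s:=u) \<in> grid k d" using sub by blast
  have sd: "s < d"
  proof (rule ccontr)
    assume "\<not> s < d"
    moreover have "\<forall>j\<ge>d. (x(s:=u)) j = 0" using x0 unfolding grid_def by blast
    ultimately have "(x(s:=u)) s = 0" using not_less by blast
    then show False using u by auto
  qed
  define c where "c = (p + (k - i)) mod k"
  define x' where "x' = x(s := c)"
  have ck: "c < k" unfolding c_def using k by simp
  have x'g: "x' \<in> grid k d" using x0 ck sd unfolding grid_def x'_def by auto
  have "(\<lambda>t. x'(s := (x' s + t) mod k)) ` ({1..k} - {i})
        = (\<lambda>v. x(s := v)) ` ((\<lambda>t. (c + t) mod k) ` ({1..k} - {i}))"
    unfolding x'_def by (simp add: image_image)
  also have "\<dots> = (\<lambda>v. x(s := v)) ` ({..<k} - {p})"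
    using mod_image[of k i p c] k i p c_def by simp
  also have "\<dots> = pline k x s p" unfolding pline_def ..
  finally show ?thesis unfolding copy_of_def using x'g sd by blast
qed

lemma good_tiles:
  assumes g: "good k X" and sub: "X \<subseteq> grid k d" and k: "3 \<le> k" and i: "1 \<le> i" "i \<le> k"
  shows "tiles k d ({1..k} - {i}) X"
proof -
  obtain P where Pl: "\<forall>A\<in>P. \<exists>x s p. p < k \<and> A = pline k x s p"
      and Pd: "pairwise disjnt P" and PU: "\<Union>P = X"
    using g unfolding good_def by blast
  have "copy_of k d ({1..k} - {i}) A" if A: "A \<in> P" for A
  proof -
    have "\<exists>x s p. p < k \<and> A = pline k x s p" using Pl A by (rule bspec)
    then obtain x s p where xsp: "p < k \<and> A = pline k x s p" by blast
    have "A \<subseteq> grid k d" using A PU sub by blast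
    then show ?thesis using pline_copy[of k x s p d i] xsp k i by simp
  qed
  then show ?thesis unfolding tiles_def using Pd PU by blast
qed



theorem lemma3:
  fixes k i d :: nat and S :: "(nat \<Rightarrow> nat) set"
  assumes "k \<ge> 3" and "2 \<le> i" and "i \<le> k - 1"
    and "d \<ge> 1"
    and "S \<subseteq> corners k d"
    and "card S mod (k - 1) = 1 mod (k - 1)"
    and "real (card S) \<le> real d - log (real k) (real d)"
  shows "tiles k d ({1..k} - {i}) (grid k d - S)"
proof -
  have k3: "3 \<le> k" using assms(1) .
  define J where "J = {j. j < d \<and> corner k j \<in> S}"
  have cor_ev: "corner k j = ev j (k-1)" for j unfolding corner_def ev_def by simp
  have SJ: "S = cors k J"
  proof
    show "S \<subseteq> cors k J"
    proof
      fix x assume x: "x \<in> S"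
      then obtain j where j: "j < d" "x = corner k j" using assms(5) unfolding corners_def by blast
      then have "j \<in> J" unfolding J_def using x by blast
      then show "x \<in> cors k J" unfolding cors_def using j cor_ev by blast
    qed
    show "cors k J \<subseteq> S"
    proof
      fix x assume "x \<in> cors k J"
      then obtain j where j: "j \<in> J" "x = ev j (k-1)" unfolding cors_def by blast
      then show "x \<in> S" unfolding J_def using cor_ev by auto
    qed
  qed
  have JD: "J \<subseteq> {..<d}" unfolding J_def by blast
  have finJ: "finite J" using JD finite_subset by blast
  have cS: "card S = card J"
  proof -
    have "cors k J = (\<lambda>j. ev j (k-1)) ` J" unfolding cors_def by blast
    moreover have "inj_on (\<lambda>j. ev j (k-1)) J"
    proof (rule inj_onI)
      fix j j' assume "ev j (k-1) = ev j' (k-1)"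
      moreover have "k - 1 \<noteq> 0" using k3 by simp
      ultimately show "j = j'" using ev_inj by blast
    qed
    ultimately show ?thesis unfolding SJ by (simp add: card_image)
  qed
  have m1: "card J mod (k - 1) = 1" using assms(6) k3 cS by simp
  have "card J \<noteq> 0" using m1 by (metis mod_0 zero_neq_one)
  then obtain s where sJ: "s \<in> J" using finJ by fastforce
  have dv: "(k - 1) dvd (card J - 1)"
  proof -
    have e: "card J div (k - 1) * (k - 1) + card J mod (k - 1) = card J" by (rule div_mult_mod_eq)
    then have "card J - 1 = card J div (k - 1) * (k - 1)" using m1 by linarith
    then show ?thesis by simp
  qed
  have cJs: "card (J - {s}) = card J - 1" using sJ finJ by simp
  have cF: "card ({..<d} - J) = d - card J" using JD finJ by (simp add: card_Diff_subset)
  have kr: "1 < real k" using k3 by simp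
  have dr: "0 < real d" using assms(4) by simp
  have lg0: "0 \<le> log (real k) (real d)" using kr assms(4) by simp
  have cJd: "card J \<le> d" using assms(7) lg0 cS by linarith
  have lg: "log (real k) (real d) \<le> real (d - card J)" using assms(7) cS cJd by (simp add: of_nat_diff)
  have "real d = real k powr (log (real k) (real d))" using kr dr by simp
  also have "\<dots> \<le> real k powr (real (d - card J))" using lg kr by (intro powr_mono) auto
  also have "\<dots> = real k ^ (d - card J)" using kr by (simp add: powr_realpow)
  finally have "real d \<le> real (k ^ (d - card J))" by simp
  then have dk: "d \<le> k ^ (d - card J)" by linarith
  have cardJ': "card (J - {s}) \<le> k ^ card ({..<d} - J) - 1" unfolding cJs cF using dk cJd by linarith
  have "good k (cube k {..<d} zr - cors k J)"
    by (rule astep[OF _ sJ JD k3 cardJ']) (use dv cJs in simp_all)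
  then have g: "good k (grid k d - S)" unfolding grid_cube SJ .
  show ?thesis by (rule good_tiles[OF g]) (use assms in auto)
qed



end
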